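(* Let $n$ be odd. Then there exist $p\in\mathcal{P}$ and a $2n$-cycle $\varphi\in G^*$ such that $\mathrm{Stab}_{G^*}(p)=\langle\varphi\rangle$ and $\mathrm{Rank}_{p(z)}(\varphi^n(z))=n$ for every $z\in I$.
   Context: Fix $n\ge 2$, $W=\{1,\dots,n\}$, $M=\{n+1,\dots,2n\}$, $I=W\cup M$. Permutations compose right-to-left. A preference profile is a function $p$ on $I$ assigning to each $x\in W$ a linear order $p(x)$ on $M$ and to each $y\in M$ a linear order $p(y)$ on $W$; $\mathcal{P}$ is the set of preference profiles. For a linear order $R$ on $X$ and $a\in X$, $\mathrm{Rank}_R(a)=|\{b\in X:b\succeq_R a\}|$. $G^*=\{\varphi\in\mathrm{Sym}(I):\{\varphi(W),\varphi(M)\}=\{W,M\}\}$. For a linear order $R$ on $X\subseteq I$ and $\varphi\in\mathrm{Sym}(I)$, $\varphi R$ is the relation on $\varphi(X)$ with $(a,b)\in\varphi R$ iff $(\varphi^{-1}(a),\varphi^{-1}(b))\in R$. For $\varphi\in G^*$, $p^\varphi(z)=\varphi\,p(\varphi^{-1}(z))$, and $\mathrm{Stab}_{G^*}(p)=\{\varphi\in G^*:p^\varphi=p\}$. *)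

theory Defs
  imports "HOL-Combinatorics.Permutations"
begin

definition Wset :: "nat \<Rightarrow> nat set" where "Wset n = {1..n}"
definition Mset :: "nat \<Rightarrow> nat set" where "Mset n = {n+1..2*n}"
definition Iset :: "nat \<Rightarrow> nat set" where "Iset n = Wset n \<union> Mset n"

text \<open>A linear order R on X is a relation (set of pairs) with (a,b) in R meaning a is
  weakly preferred to b (a \<succeq> b).\<close>
definition profile :: "nat \<Rightarrow> (nat \<Rightarrow> (nat \<times> nat) set) \<Rightarrow> bool" where
  "profile n p \<longleftrightarrow>
     (\<forall>x\<in>Wset n. linear_order_on (Mset n) (p x)) \<and>
     (\<forall>y\<in>Mset n. linear_order_on (Wset n) (p y)) \<and>
     (\<forall>z. z \<notin> Iset n \<longrightarrow> p z = {})"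

definition Rank :: "(nat \<times> nat) set \<Rightarrow> nat \<Rightarrow> nat" where
  "Rank R a = card {b. (b, a) \<in> R}"

definition Gstar :: "nat \<Rightarrow> (nat \<Rightarrow> nat) set" where
  "Gstar n = {\<phi>. \<phi> permutes Iset n \<and> {\<phi> ` Wset n, \<phi> ` Mset n} = {Wset n, Mset n}}"

definition rel_image :: "(nat \<Rightarrow> nat) \<Rightarrow> (nat \<times> nat) set \<Rightarrow> (nat \<times> nat) set" where
  "rel_image \<phi> R = {(\<phi> a, \<phi> b) | a b. (a, b) \<in> R}"

definition prof_act :: "(nat \<Rightarrow> nat) \<Rightarrow> (nat \<Rightarrow> (nat \<times> nat) set) \<Rightarrow> (nat \<Rightarrow> (nat \<times> nat) set)" where
  "prof_act \<phi> p = (\<lambda>z. rel_image \<phi> (p (inv \<phi> z)))"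

definition Stab :: "nat \<Rightarrow> (nat \<Rightarrow> (nat \<times> nat) set) \<Rightarrow> (nat \<Rightarrow> nat) set" where
  "Stab n p = {\<phi> \<in> Gstar n. prof_act \<phi> p = p}"

definition cyclic_gen :: "(nat \<Rightarrow> nat) \<Rightarrow> (nat \<Rightarrow> nat) set" where
  "cyclic_gen \<phi> = {\<phi> ^^ k | k. True}"

definition is_2n_cycle :: "nat \<Rightarrow> (nat \<Rightarrow> nat) \<Rightarrow> bool" where
  "is_2n_cycle n \<phi> \<longleftrightarrow> \<phi> permutes Iset n \<and>
     (\<exists>z\<in>Iset n. card {(\<phi> ^^ k) z | k. True} = 2 * n)"

end

theory Submission
  imports Defs
begin

definition idx :: "nat \<Rightarrow> nat \<Rightarrow> int" where
  "idx n z = (if z \<le> n then 2*(int z - 1) else 2*(int z - int n - 1) + 1)"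
definition ee :: "nat \<Rightarrow> int \<Rightarrow> nat" where
  "ee n j = nat (if even j then j div 2 + 1 else int n + j div 2 + 1)"
definition phi :: "nat \<Rightarrow> nat \<Rightarrow> nat" where
  "phi n z = (if z \<in> Iset n then ee n ((idx n z + 1) mod (2*int n)) else z)"
definition oth :: "nat \<Rightarrow> nat \<Rightarrow> nat set" where
  "oth n z = {a \<in> Iset n. odd (idx n a + idx n z)}"
definition rk :: "nat \<Rightarrow> nat \<Rightarrow> nat \<Rightarrow> nat" where
  "rk n z a = nat (((idx n a - idx n z + int n - 1) mod (2*int n)) div 2 + 1)"
definition pp :: "nat \<Rightarrow> nat \<Rightarrow> (nat \<times> nat) set" where
  "pp n z = (if z \<in> Iset n then {(a,b). a \<in> oth n z \<and> b \<in> oth n z \<and> rk n z a \<le> rk n z b} else {})"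

lemma I_iff: "z \<in> Iset n \<longleftrightarrow> 1 \<le> z \<and> z \<le> 2*n"
  unfolding Iset_def Wset_def Mset_def by auto

lemma idx_range: "z \<in> Iset n \<Longrightarrow> 0 \<le> idx n z \<and> idx n z < 2*int n"
  unfolding I_iff idx_def by auto

lemma ee_idx: "z \<in> Iset n \<Longrightarrow> ee n (idx n z) = z"
  unfolding I_iff idx_def ee_def by auto

lemma odd_aux: "odd j \<Longrightarrow> 1 + 2*(j div 2) = (j::int)" by presburger

lemma idx_ee: "0 \<le> j \<Longrightarrow> j < 2*int n \<Longrightarrow> idx n (ee n j) = j \<and> ee n j \<in> Iset n"
  unfolding I_iff idx_def ee_def by (auto simp: odd_aux)

lemma W_iff: "z \<in> Iset n \<Longrightarrow> z \<in> Wset n \<longleftrightarrow> even (idx n z)"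
  unfolding I_iff idx_def Wset_def by auto

lemma M_iff: "z \<in> Iset n \<Longrightarrow> z \<in> Mset n \<longleftrightarrow> odd (idx n z)"
  unfolding I_iff idx_def Mset_def by auto

lemma phi_pow: "(phi n ^^ k) z = (if z \<in> Iset n then ee n ((idx n z + int k) mod (2*int n)) else z)"
proof (induction k)
  case 0
  then show ?case using idx_range[of z n] by (simp add: ee_idx)
next
  case (Suc k)
  show ?case
  proof (cases "z \<in> Iset n")
    case True
    have n0: "n > 0" using True unfolding I_iff by auto
    let ?x = "(idx n z + int k) mod (2*int n)"
    have r: "0 \<le> ?x" "?x < 2*int n" using n0 by auto
    have "(phi n ^^ Suc k) z = phi n (ee n ?x)" using Suc True by simp
    also have "\<dots> = ee n ((?x + 1) mod (2*int n))"
      using idx_ee[OF r] unfolding phi_def by simp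
    also have "(?x + 1) mod (2*int n) = (idx n z + int (Suc k)) mod (2*int n)"
      by (simp add: mod_simps add_ac)
    finally show ?thesis using True by simp
  next
    case False
    then show ?thesis using Suc by (simp add: phi_def)
  qed
qed


lemma card_W: "card (Wset n) = n" unfolding Wset_def by simp
lemma card_M: "card (Mset n) = n" unfolding Mset_def by simp
lemma fin_I: "finite (Iset n)" unfolding Iset_def Wset_def Mset_def by simp

lemma oth_eq: "z \<in> Iset n \<Longrightarrow> oth n z = (if z \<in> Wset n then Mset n else Wset n)"
proof -
  assume z: "z \<in> Iset n"
  have sub: "Wset n \<subseteq> Iset n" "Mset n \<subseteq> Iset n" unfolding Iset_def by auto
  have WM: "a \<in> Wset n \<longleftrightarrow> a \<in> Iset n \<and> even (idx n a)" "a \<in> Mset n \<longleftrightarrow> a \<in> Iset n \<and> odd (idx n a)" for a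
    using W_iff[of a n] M_iff[of a n] sub by blast+
  show ?thesis
  proof (cases "z \<in> Wset n")
    case True
    then have "even (idx n z)" using WM by blast
    then show ?thesis using True by (simp add: oth_def set_eq_iff WM)
  next
    case False
    then have "odd (idx n z)" using WM z by blast
    then show ?thesis using False by (simp add: oth_def set_eq_iff WM)
  qed
qed

lemma card_oth: "z \<in> Iset n \<Longrightarrow> card (oth n z) = n"
  using oth_eq card_W card_M by simp

lemma oth_sub: "oth n z \<subseteq> Iset n" unfolding oth_def by auto

lemma fin_oth: "finite (oth n z)" using oth_sub fin_I finite_subset by blast

lemma rk_range: "n > 0 \<Longrightarrow> rk n z a \<in> {1..n}"
proof -
  assume n: "n > 0"
  let ?u = "(idx n a - idx n z + int n - 1) mod (2*int n)"
  have "0 \<le> ?u" "?u < 2*int n" using n by auto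
  then have "0 \<le> ?u div 2" "?u div 2 < int n" by auto
  then show ?thesis unfolding rk_def by auto
qed

lemma mod_cancel_int: "(a + c) mod N = (b + c) mod (N::int) \<Longrightarrow> a mod N = b mod N"
  by (metis mod_diff_left_eq add_diff_cancel_right')

lemma parity_mod: "even (N::int) \<Longrightarrow> even (x mod N) \<longleftrightarrow> even x"
  by (simp add: dvd_mod_iff)

lemma rk_inj:
  assumes n: "odd n" and z: "z \<in> Iset n" and a: "a \<in> oth n z" and b: "b \<in> oth n z"
    and e: "rk n z a = rk n z b"
  shows "a = b"
proof -
  have n0: "n > 0" using n by (cases n) auto
  let ?N = "2*int n"
  define ua where "ua = (idx n a - idx n z + int n - 1) mod ?N"
  define ub where "ub = (idx n b - idx n z + int n - 1) mod ?N"
  have ra: "0 \<le> ua" "ua < ?N" "0 \<le> ub" "ub < ?N" using n0 unfolding ua_def ub_def by auto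
  have "nat (ua div 2 + 1) = nat (ub div 2 + 1)" using e unfolding rk_def ua_def ub_def by simp
  then have d: "ua div 2 = ub div 2" using ra by simp
  have en: "even (int n - 1)" using n by simp
  have oa: "odd (idx n a - idx n z)" using a unfolding oth_def by (simp add: even_diff)
  have ob: "odd (idx n b - idx n z)" using b unfolding oth_def by (simp add: even_diff)
  have "odd ua" unfolding ua_def using parity_mod[of ?N] oa en by simp
  moreover have "odd ub" unfolding ub_def using parity_mod[of ?N] ob en by simp
  ultimately have "ua = ub" using d odd_aux by metis
  then have "(idx n a + (- idx n z + int n - 1)) mod ?N = (idx n b + (- idx n z + int n - 1)) mod ?N"
    unfolding ua_def ub_def by (simp add: algebra_simps)
  then have "idx n a mod ?N = idx n b mod ?N" by (rule mod_cancel_int)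
  moreover have "a \<in> Iset n" "b \<in> Iset n" using a b oth_sub by auto
  ultimately have "idx n a = idx n b" using idx_range by simp
  then show ?thesis using ee_idx \<open>a \<in> Iset n\<close> \<open>b \<in> Iset n\<close> by metis
qed

lemma rk_bij:
  assumes n: "odd n" and z: "z \<in> Iset n"
  shows "bij_betw (rk n z) (oth n z) {1..n}"
proof -
  have n0: "n > 0" using n by (cases n) auto
  have inj: "inj_on (rk n z) (oth n z)" using rk_inj[OF n z] by (meson inj_onI)
  have sub: "rk n z ` oth n z \<subseteq> {1..n}" using rk_range[OF n0] by auto
  have "card (rk n z ` oth n z) = card {1..n}" using card_image[OF inj] card_oth[OF z] by simp
  then have "rk n z ` oth n z = {1..n}" using sub by (simp add: card_subset_eq)
  then show ?thesis using inj by (simp add: bij_betw_def)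
qed

lemma Rank_pp:
  assumes n: "odd n" and z: "z \<in> Iset n" and b: "b \<in> oth n z"
  shows "Rank (pp n z) b = rk n z b"
proof -
  have bij: "bij_betw (rk n z) (oth n z) {1..n}" by (rule rk_bij[OF n z])
  let ?S = "{c \<in> oth n z. rk n z c \<le> rk n z b}"
  have eq: "{c. (c, b) \<in> pp n z} = ?S"
    using z b unfolding pp_def by auto
  have inj0: "inj_on (rk n z) (oth n z)" using bij by (simp add: bij_betw_def)
  have inj: "inj_on (rk n z) ?S"
    by (rule inj_on_subset[OF inj0]) auto
  have im: "rk n z ` oth n z = {1..n}" using bij by (simp add: bij_betw_def)
  have bn: "rk n z b \<le> n" using im b by auto
  have img: "rk n z ` ?S = {1..rk n z b}"
  proof
    show "rk n z ` ?S \<subseteq> {1..rk n z b}" using im by auto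
  next
    show "{1..rk n z b} \<subseteq> rk n z ` ?S"
    proof
      fix i assume i: "i \<in> {1..rk n z b}"
      then have "i \<in> rk n z ` oth n z" using im bn by auto
      then obtain c where c: "c \<in> oth n z" "i = rk n z c" by auto
      then show "i \<in> rk n z ` ?S" using i by auto
    qed
  qed
  show ?thesis unfolding Rank_def eq using card_image[OF inj] img by simp
qed

lemma lin_pp:
  assumes n: "odd n" and z: "z \<in> Iset n"
  shows "linear_order_on (oth n z) (pp n z)"
proof -
  have inj: "\<And>a b. a \<in> oth n z \<Longrightarrow> b \<in> oth n z \<Longrightarrow> rk n z a = rk n z b \<Longrightarrow> a = b"
    using rk_inj[OF n z] by blast
  have P: "pp n z = {(a,b). a \<in> oth n z \<and> b \<in> oth n z \<and> rk n z a \<le> rk n z b}"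
    using z by (simp add: pp_def)
  have 1: "pp n z \<subseteq> oth n z \<times> oth n z" unfolding P by auto
  have 2: "refl_on (oth n z) (pp n z)" unfolding P refl_on_def by auto
  have 3: "trans (pp n z)" unfolding P trans_def by auto
  have 4: "antisym (pp n z)" unfolding P antisym_def using inj by fastforce
  have 5: "total_on (oth n z) (pp n z)" unfolding P total_on_def by auto
  show ?thesis
    unfolding linear_order_on_def partial_order_on_def preorder_on_def using 1 2 3 4 5 by blast
qed

lemma mod_shift: "((a + s) mod N - (w + s) mod N + c) mod N = (a - w + c) mod (N::int)"
  by (metis add_diff_cancel_right mod_add_cong mod_diff_eq)

definition tr :: "nat \<Rightarrow> int \<Rightarrow> nat \<Rightarrow> nat" where
  "tr n s z = (if z \<in> Iset n then ee n ((idx n z + s) mod (2*int n)) else z)"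

lemma phi_pow_tr: "phi n ^^ k = tr n (int k)"
  by (rule ext) (simp add: phi_pow tr_def)

lemma phi_tr: "phi n = tr n 1"
  using phi_pow_tr[where n=n and k=1] by simp

lemma tr_I:
  assumes n: "n > 0" and a: "a \<in> Iset n"
  shows "tr n s a \<in> Iset n" "idx n (tr n s a) = (idx n a + s) mod (2*int n)"
proof -
  have "0 \<le> (idx n a + s) mod (2*int n)" "(idx n a + s) mod (2*int n) < 2*int n" using n by auto
  then show "tr n s a \<in> Iset n" "idx n (tr n s a) = (idx n a + s) mod (2*int n)"
    using idx_ee a unfolding tr_def by auto
qed

lemma tr_inj:
  assumes n: "n > 0" and a: "a \<in> Iset n" and b: "b \<in> Iset n" and e: "tr n s a = tr n s b"
  shows "a = b"
proof -
  have "(idx n a + s) mod (2*int n) = (idx n b + s) mod (2*int n)"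
    using tr_I(2)[OF n a, of s] tr_I(2)[OF n b, of s] e by simp
  then have "idx n a mod (2*int n) = idx n b mod (2*int n)" by (rule mod_cancel_int)
  then have "idx n a = idx n b" using idx_range a b by simp
  then show ?thesis using ee_idx a b by metis
qed

lemma tr_surj:
  assumes n: "n > 0" and y: "y \<in> Iset n"
  shows "\<exists>a\<in>Iset n. y = tr n s a"
proof -
  let ?j = "(idx n y - s) mod (2*int n)"
  have r: "0 \<le> ?j" "?j < 2*int n" using n by auto
  let ?a = "ee n ?j"
  have a: "?a \<in> Iset n" "idx n ?a = ?j" using idx_ee[OF r] by auto
  have "idx n (tr n s ?a) = (?j + s) mod (2*int n)" using tr_I(2)[OF n a(1)] a(2) by simp
  also have "\<dots> = idx n y mod (2*int n)" by (simp add: mod_simps)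
  also have "\<dots> = idx n y" using idx_range[OF y] by simp
  finally have "tr n s ?a = y" using ee_idx tr_I(1)[OF n a(1)] y by metis
  then show ?thesis using a by metis
qed

lemma tr_perm:
  assumes n: "n > 0"
  shows "tr n s permutes Iset n"
proof (rule bij_imp_permutes)
  show "bij_betw (tr n s) (Iset n) (Iset n)"
    unfolding bij_betw_def
  proof
    show "inj_on (tr n s) (Iset n)" using tr_inj[OF n] by (meson inj_onI)
    show "tr n s ` Iset n = Iset n" using tr_I(1)[OF n] tr_surj[OF n] by blast
  qed
next
  fix x assume "x \<notin> Iset n" then show "tr n s x = x" by (simp add: tr_def)
qed

lemma WI: "Wset n \<subseteq> Iset n" and MI: "Mset n \<subseteq> Iset n" unfolding Iset_def by auto

lemma tr_par:
  assumes n: "n > 0" and a: "a \<in> Iset n"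
  shows "even (idx n (tr n s a)) \<longleftrightarrow> even (idx n a + s)"
  using tr_I(2)[OF n a] parity_mod[of "2*int n"] by simp

lemma img_card:
  assumes n: "n > 0" and sub: "tr n s ` A \<subseteq> B" and AI: "A \<subseteq> Iset n" and c: "card A = n" "card B = n"
    and fB: "finite B"
  shows "tr n s ` A = B"
proof -
  have "inj_on (tr n s) A" using tr_inj[OF n] AI by (meson inj_onI subsetD)
  then have "card (tr n s ` A) = card B" using card_image c by metis
  then show ?thesis using sub fB card_subset_eq by metis
qed

lemma tr_Gstar:
  assumes n: "n > 0"
  shows "tr n s \<in> Gstar n"
proof -
  have fW: "finite (Wset n)" and fM: "finite (Mset n)" unfolding Wset_def Mset_def by auto
  have sW: "tr n s ` Wset n \<subseteq> (if even s then Wset n else Mset n)"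
  proof
    fix y assume "y \<in> tr n s ` Wset n"
    then obtain a where a: "a \<in> Wset n" "y = tr n s a" by auto
    have aI: "a \<in> Iset n" using a WI by auto
    have "even (idx n a)" using W_iff[OF aI] a by simp
    then show "y \<in> (if even s then Wset n else Mset n)"
      using a tr_par[OF n aI, of s] W_iff M_iff tr_I(1)[OF n aI] by auto
  qed
  have sM: "tr n s ` Mset n \<subseteq> (if even s then Mset n else Wset n)"
  proof
    fix y assume "y \<in> tr n s ` Mset n"
    then obtain a where a: "a \<in> Mset n" "y = tr n s a" by auto
    have aI: "a \<in> Iset n" using a MI by auto
    have "odd (idx n a)" using M_iff[OF aI] a by simp
    then show "y \<in> (if even s then Mset n else Wset n)"
      using a tr_par[OF n aI, of s] W_iff M_iff tr_I(1)[OF n aI] by auto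
  qed
  have eW: "tr n s ` Wset n = (if even s then Wset n else Mset n)"
    by (rule img_card[OF n sW WI]) (auto simp: card_W card_M fW fM)
  have eM: "tr n s ` Mset n = (if even s then Mset n else Wset n)"
    by (rule img_card[OF n sM MI]) (auto simp: card_W card_M fW fM)
  show ?thesis unfolding Gstar_def using tr_perm[OF n] eW eM by auto
qed

lemma pa_iff:
  assumes "\<psi> permutes S"
  shows "prof_act \<psi> p = p \<longleftrightarrow> (\<forall>w. p (\<psi> w) = rel_image \<psi> (p w))"
proof
  assume h: "prof_act \<psi> p = p"
  show "\<forall>w. p (\<psi> w) = rel_image \<psi> (p w)"
  proof
    fix w
    have "p (\<psi> w) = prof_act \<psi> p (\<psi> w)" using h by simp
    also have "\<dots> = rel_image \<psi> (p w)" unfolding prof_act_def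
      using permutes_inverses(2)[OF assms] by simp
    finally show "p (\<psi> w) = rel_image \<psi> (p w)" .
  qed
next
  assume h: "\<forall>w. p (\<psi> w) = rel_image \<psi> (p w)"
  show "prof_act \<psi> p = p"
  proof
    fix z
    have "prof_act \<psi> p z = rel_image \<psi> (p (inv \<psi> z))" unfolding prof_act_def by simp
    also have "\<dots> = p (\<psi> (inv \<psi> z))" using h by simp
    also have "\<dots> = p z" using permutes_inverses(1)[OF assms] by simp
    finally show "prof_act \<psi> p z = p z" .
  qed
qed

lemma tr_oth:
  assumes n: "n > 0" and w: "w \<in> Iset n" and a: "a \<in> Iset n"
  shows "tr n s a \<in> oth n (tr n s w) \<longleftrightarrow> a \<in> oth n w"
proof -
  have "even (idx n (tr n s a) + idx n (tr n s w)) \<longleftrightarrow> even (idx n a + idx n w)"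
    using tr_par[OF n a, of s] tr_par[OF n w, of s] by auto
  then have e: "odd (idx n (tr n s a) + idx n (tr n s w)) \<longleftrightarrow> odd (idx n a + idx n w)" by blast
  show ?thesis unfolding oth_def mem_Collect_eq using e a tr_I(1)[OF n a] by blast
qed

lemma tr_rk:
  assumes n: "n > 0" and w: "w \<in> Iset n" and a: "a \<in> Iset n"
  shows "rk n (tr n s w) (tr n s a) = rk n w a"
proof -
  have h: "((idx n a + s) mod (2*int n) - (idx n w + s) mod (2*int n) + int n - 1) mod (2*int n)
     = (idx n a - idx n w + int n - 1) mod (2*int n)"
    using mod_shift[of "idx n a" s "2*int n" "idx n w" "int n - 1"] by (simp only: add_diff_eq)
  show ?thesis by (simp only: rk_def tr_I(2)[OF n a] tr_I(2)[OF n w] h)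
qed

lemma tr_inv:
  assumes n: "n > 0"
  shows "pp n (tr n s w) = rel_image (tr n s) (pp n w)"
proof (cases "w \<in> Iset n")
  case False
  then show ?thesis by (simp add: tr_def pp_def rel_image_def)
next
  case w: True
  let ?t = "tr n s"
  have tw: "?t w \<in> Iset n" using tr_I(1)[OF n w] .
  show ?thesis
  proof
    show "pp n (?t w) \<subseteq> rel_image ?t (pp n w)"
    proof
      fix x assume "x \<in> pp n (?t w)"
      then obtain x1 x2 where x: "x = (x1, x2)" "x1 \<in> oth n (?t w)" "x2 \<in> oth n (?t w)"
        "rk n (?t w) x1 \<le> rk n (?t w) x2"
        using tw unfolding pp_def by auto
      have "x1 \<in> Iset n" "x2 \<in> Iset n" using x oth_sub by auto
      then obtain a b where ab: "a \<in> Iset n" "x1 = ?t a" "b \<in> Iset n" "x2 = ?t b"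
        using tr_surj[OF n] by metis
      have "a \<in> oth n w" "b \<in> oth n w" using x ab tr_oth[OF n w] by auto
      moreover have "rk n w a \<le> rk n w b" using x ab tr_rk[OF n w] by metis
      ultimately have "(a, b) \<in> pp n w" using w unfolding pp_def by simp
      then show "x \<in> rel_image ?t (pp n w)" unfolding rel_image_def using x ab by blast
    qed
  next
    show "rel_image ?t (pp n w) \<subseteq> pp n (?t w)"
    proof
      fix x assume "x \<in> rel_image ?t (pp n w)"
      then obtain a b where ab: "x = (?t a, ?t b)" "(a, b) \<in> pp n w" unfolding rel_image_def by blast
      then have ab2: "a \<in> oth n w" "b \<in> oth n w" "rk n w a \<le> rk n w b" using w unfolding pp_def by auto
      then have aI: "a \<in> Iset n" "b \<in> Iset n" using oth_sub by auto
      have "?t a \<in> oth n (?t w)" "?t b \<in> oth n (?t w)" using ab2 aI tr_oth[OF n w] by auto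
      moreover have "rk n (?t w) (?t a) \<le> rk n (?t w) (?t b)" using ab2 aI tr_rk[OF n w] by metis
      ultimately show "x \<in> pp n (?t w)" using tw ab unfolding pp_def by simp
    qed
  qed
qed

lemma tr_stab:
  assumes n: "n > 0"
  shows "prof_act (tr n s) (pp n) = pp n"
  using pa_iff[OF tr_perm[OF n]] tr_inv[OF n] by blast

lemma u_odd:
  assumes n: "odd n" and a: "a \<in> oth n z"
  shows "odd ((idx n a - idx n z + int n - 1) mod (2*int n))"
proof -
  have en: "even (int n - 1)" using n by simp
  have oa: "odd (idx n a - idx n z)" using a unfolding oth_def by (simp add: even_diff)
  show ?thesis using parity_mod[of "2*int n"] oa en by simp
qed

lemma rk_cong:
  assumes n: "odd n" and a: "a \<in> oth n z" and a': "a' \<in> oth n z'"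
    and e: "rk n z' a' = rk n z a"
  shows "(2*int n) dvd ((idx n a' - idx n z') - (idx n a - idx n z))"
proof -
  have n0: "n > 0" using n by (cases n) auto
  let ?N = "2*int n"
  define ua where "ua = (idx n a - idx n z + int n - 1) mod ?N"
  define ub where "ub = (idx n a' - idx n z' + int n - 1) mod ?N"
  have ra: "0 \<le> ua" "ua < ?N" "0 \<le> ub" "ub < ?N" using n0 unfolding ua_def ub_def by auto
  have "nat (ua div 2 + 1) = nat (ub div 2 + 1)" using e unfolding rk_def ua_def ub_def by simp
  then have d: "ua div 2 = ub div 2" using ra by simp
  have "odd ua" unfolding ua_def using u_odd[OF n a] .
  moreover have "odd ub" unfolding ub_def using u_odd[OF n a'] .
  ultimately have "ua = ub" using d odd_aux by metis
  then have "((idx n a - idx n z) + (int n - 1)) mod ?N = ((idx n a' - idx n z') + (int n - 1)) mod ?N"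
    unfolding ua_def ub_def by (simp add: algebra_simps)
  then have "(idx n a - idx n z) mod ?N = (idx n a' - idx n z') mod ?N" by (rule mod_cancel_int)
  then show ?thesis by (metis mod_eq_dvd_iff)
qed

lemma Rank_img:
  assumes "inj \<psi>"
  shows "Rank (rel_image \<psi> R) (\<psi> a) = Rank R a"
proof -
  have "{b. (b, \<psi> a) \<in> rel_image \<psi> R} = \<psi> ` {b. (b, a) \<in> R}"
    using assms unfolding rel_image_def inj_def by auto
  moreover have "inj_on \<psi> {b. (b, a) \<in> R}" using assms inj_on_subset by blast
  ultimately show ?thesis unfolding Rank_def by (simp add: card_image)
qed

lemma stab_sub:
  assumes n: "odd n" and psi: "\<psi> permutes Iset n" and st: "prof_act \<psi> (pp n) = pp n"
  shows "\<psi> \<in> cyclic_gen (phi n)"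
proof -
  have n0: "n > 0" using n by (cases n) auto
  let ?N = "2*int n"
  have inv: "\<And>w. pp n (\<psi> w) = rel_image \<psi> (pp n w)" using pa_iff[OF psi] st by blast
  have injp: "inj \<psi>" using permutes_inj[OF psi] .
  have psiI: "\<And>a. a \<in> Iset n \<Longrightarrow> \<psi> a \<in> Iset n" using psi permutes_in_image by metis
  define \<delta> where "\<delta> z = idx n (\<psi> z) - idx n z" for z
  have key: "?N dvd (\<delta> a - \<delta> w)" if w: "w \<in> Iset n" and a: "a \<in> oth n w" for a w
  proof -
    have "(a, a) \<in> pp n w" using w a unfolding pp_def by simp
    then have "(\<psi> a, \<psi> a) \<in> pp n (\<psi> w)" using inv unfolding rel_image_def by blast
    then have pa: "\<psi> a \<in> oth n (\<psi> w)" and pw: "\<psi> w \<in> Iset n" unfolding pp_def by (auto split: if_splits)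
    have "rk n (\<psi> w) (\<psi> a) = Rank (pp n (\<psi> w)) (\<psi> a)" using Rank_pp[OF n pw pa] by simp
    also have "\<dots> = Rank (pp n w) a" using inv Rank_img[OF injp] by simp
    also have "\<dots> = rk n w a" using Rank_pp[OF n w a] .
    finally have "?N dvd ((idx n (\<psi> a) - idx n (\<psi> w)) - (idx n a - idx n w))"
      using rk_cong[OF n a pa] by simp
    then show ?thesis unfolding \<delta>_def by (simp add: algebra_simps)
  qed
  have one: "(1::nat) \<in> Iset n" using n0 unfolding I_iff by auto
  have m1: "n + 1 \<in> Iset n" using n0 unfolding I_iff by auto
  have oth1: "oth n 1 = Mset n" using oth_eq[OF one] n0 by (simp add: Wset_def)
  have m1M: "n + 1 \<in> Mset n" using n0 by (simp add: Mset_def)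
  have const: "?N dvd (\<delta> z - \<delta> 1)" if z: "z \<in> Iset n" for z
  proof (cases "z \<in> Wset n")
    case True
    have "n + 1 \<in> oth n z" using oth_eq[OF z] True m1M by simp
    then have A: "?N dvd (\<delta> (n+1) - \<delta> z)" using key[OF z] by blast
    have B: "?N dvd (\<delta> (n+1) - \<delta> 1)" using key[OF one] oth1 m1M by blast
    have "\<delta> z - \<delta> 1 = (\<delta> (n+1) - \<delta> 1) - (\<delta> (n+1) - \<delta> z)" by simp
    then show ?thesis using A B by (metis dvd_diff)
  next
    case False
    then have "z \<in> Mset n" using z unfolding Iset_def by auto
    then show ?thesis using key[OF one] oth1 by blast
  qed
  define s where "s = \<delta> 1 mod ?N"
  have s0: "0 \<le> s" using n0 unfolding s_def by simp
  have "\<psi> = tr n s"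
  proof
    fix z show "\<psi> z = tr n s z"
    proof (cases "z \<in> Iset n")
      case False
      then show ?thesis using psi by (simp add: tr_def permutes_not_in)
    next
      case True
      have d: "?N dvd (\<delta> z - \<delta> 1)" using const[OF True] .
      have "idx n (\<psi> z) mod ?N = (idx n z + \<delta> z) mod ?N" unfolding \<delta>_def by simp
      also have "\<dots> = (idx n z + \<delta> 1) mod ?N" using d by (simp add: mod_eq_dvd_iff)
      also have "\<dots> = (idx n z + s) mod ?N" unfolding s_def by (simp add: mod_simps)
      finally have "idx n (\<psi> z) = (idx n z + s) mod ?N" using idx_range[OF psiI[OF True]] by simp
      then have "\<psi> z = ee n ((idx n z + s) mod ?N)" using ee_idx[OF psiI[OF True]] by metis
      then show ?thesis using True by (simp add: tr_def)
    qed
  qed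
  also have "\<dots> = phi n ^^ (nat s)" using phi_pow_tr s0 by simp
  finally show ?thesis unfolding cyclic_gen_def by blast
qed

lemma orbit_card:
  assumes n0: "n > 0"
  shows "card {(phi n ^^ k) 1 | k. True} = 2 * n"
proof -
  have one: "(1::nat) \<in> Iset n" using n0 unfolding I_iff by auto
  have i1: "idx n 1 = 0" unfolding idx_def using n0 by simp
  have eq: "{(phi n ^^ k) 1 | k. True} = ee n ` {0..<2*int n}"
  proof
    show "{(phi n ^^ k) 1 | k. True} \<subseteq> ee n ` {0..<2*int n}"
    proof
      fix y assume "y \<in> {(phi n ^^ k) 1 | k. True}"
      then obtain k where "y = (phi n ^^ k) 1" by auto
      then have "y = ee n (int k mod (2*int n))" using one i1 by (simp add: phi_pow)
      moreover have "int k mod (2*int n) \<in> {0..<2*int n}" using n0 by simp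
      ultimately show "y \<in> ee n ` {0..<2*int n}" by blast
    qed
  next
    show "ee n ` {0..<2*int n} \<subseteq> {(phi n ^^ k) 1 | k. True}"
    proof
      fix y assume "y \<in> ee n ` {0..<2*int n}"
      then obtain j where j: "0 \<le> j" "j < 2*int n" "y = ee n j" by auto
      have "(phi n ^^ nat j) 1 = ee n (int (nat j) mod (2*int n))" using one i1 by (simp add: phi_pow)
      also have "\<dots> = y" using j by simp
      finally show "y \<in> {(phi n ^^ k) 1 | k. True}" by blast
    qed
  qed
  have inj: "inj_on (ee n) {0..<2*int n}"
    by (rule inj_onI) (metis atLeastLessThan_iff idx_ee)
  show ?thesis unfolding eq card_image[OF inj] by simp
qed

theorem proposition17:
  fixes n :: nat
  assumes "n \<ge> 2" and "odd n"
  shows "\<exists>p \<phi>. profile n p \<and> \<phi> \<in> Gstar n \<and> is_2n_cycle n \<phi> \<and>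
           Stab n p = cyclic_gen \<phi> \<and>
           (\<forall>z\<in>Iset n. Rank (p z) ((\<phi> ^^ n) z) = n)"
proof (intro exI conjI)
  have n: "odd n" using assms by simp
  have n0: "n > 0" using assms by simp
  show "profile n (pp n)"
    unfolding profile_def
  proof (intro conjI ballI allI impI)
    fix x assume x: "x \<in> Wset n"
    then have xI: "x \<in> Iset n" using WI by auto
    show "linear_order_on (Mset n) (pp n x)" using lin_pp[OF n xI] oth_eq[OF xI] x by simp
  next
    fix y assume y: "y \<in> Mset n"
    then have yI: "y \<in> Iset n" using MI by auto
    have "y \<notin> Wset n" using y unfolding Wset_def Mset_def by auto
    then show "linear_order_on (Wset n) (pp n y)" using lin_pp[OF n yI] oth_eq[OF yI] by simp
  next
    fix z assume "z \<notin> Iset n" then show "pp n z = {}" by (simp add: pp_def)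
  qed
  show "phi n \<in> Gstar n" using phi_tr tr_Gstar[OF n0] by simp
  show "is_2n_cycle n (phi n)"
    unfolding is_2n_cycle_def
  proof
    show "phi n permutes Iset n" using phi_tr tr_perm[OF n0] by simp
    have one: "(1::nat) \<in> Iset n" using n0 unfolding I_iff by auto
    then show "\<exists>z\<in>Iset n. card {(phi n ^^ k) z | k. True} = 2 * n" using orbit_card[OF n0] by blast
  qed
  show "Stab n (pp n) = cyclic_gen (phi n)"
  proof
    show "Stab n (pp n) \<subseteq> cyclic_gen (phi n)"
      unfolding Stab_def Gstar_def using stab_sub[OF n] by blast
  next
    show "cyclic_gen (phi n) \<subseteq> Stab n (pp n)"
    proof
      fix \<psi> assume "\<psi> \<in> cyclic_gen (phi n)"
      then obtain k where k: "\<psi> = phi n ^^ k" unfolding cyclic_gen_def by blast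
      then have "\<psi> = tr n (int k)" using phi_pow_tr by simp
      then show "\<psi> \<in> Stab n (pp n)" unfolding Stab_def using tr_Gstar[OF n0] tr_stab[OF n0] by simp
    qed
  qed
  show "\<forall>z\<in>Iset n. Rank (pp n z) ((phi n ^^ n) z) = n"
  proof
    fix z assume z: "z \<in> Iset n"
    let ?N = "2*int n"
    have t: "(phi n ^^ n) z = tr n (int n) z" using phi_pow_tr by simp
    have tI: "tr n (int n) z \<in> Iset n" and ti: "idx n (tr n (int n) z) = (idx n z + int n) mod ?N"
      using tr_I[OF n0 z] by auto
    have "odd (idx n (tr n (int n) z) + idx n z)"
      using ti parity_mod[of ?N "idx n z + int n"] n by simp
    then have o: "tr n (int n) z \<in> oth n z" using tI unfolding oth_def by simp
    have h2: "((idx n z + int n) mod ?N - idx n z + int n - 1) mod ?N = ?N - 1"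
    proof -
      define i where "i = idx n z"
      have r: "0 \<le> i" "i < ?N" using idx_range[OF z] unfolding i_def by auto
      have "((i + int n) mod ?N - i + int n - 1) mod ?N = ?N - 1"
      proof (cases "i + int n < ?N")
        case True
        then have "(i + int n) mod ?N = i + int n" using r by simp
        then show ?thesis using n0 by (simp add: zmod_minus1)
      next
        case False
        have "(i + int n - ?N) mod ?N = i + int n - ?N" using False r by simp
        moreover have "(i + int n - ?N) mod ?N = (i + int n) mod ?N" by (simp only: minus_mod_self2)
        ultimately have e: "(i + int n) mod ?N = i + int n - ?N" by simp
        have "(i + int n) mod ?N - i + int n - 1 = (?N - 1) - ?N" unfolding e by simp
        then have "((i + int n) mod ?N - i + int n - 1) mod ?N = ((?N - 1) - ?N) mod ?N" by (rule arg_cong)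
        also have "\<dots> = (?N - 1) mod ?N" by (simp only: minus_mod_self2)
        also have "\<dots> = ?N - 1" using n0 by (simp add: zmod_minus1)
        finally show ?thesis .
      qed
      then show ?thesis unfolding i_def .
    qed
    have "rk n z (tr n (int n) z) = n"
      unfolding rk_def ti h2 by simp
    then show "Rank (pp n z) ((phi n ^^ n) z) = n" using Rank_pp[OF n z o] t by simp
  qed
qed

end
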